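(* Every Tarskian logic $\mathcal{L}=({\bf F}(\Theta,\mathcal{V}),\vdash)$ is characterized by a two-valued RNmatrix, i.e. there is an RNmatrix $\mathcal{M}=(\mathcal{A},\{1\},\mathcal{F})$ over $\Theta$ whose multialgebra $\mathcal{A}$ has universe $\{0,1\}$ such that for all $\Gamma\cup\{\varphi\}$, $\Gamma\vdash\varphi$ iff $\Gamma\vDash^{\mathsf{RN}}_{\mathcal{M}}\varphi$. If in addition $\mathcal{L}$ is structural, then $\mathcal{M}$ can be chosen structural.
   Context: A logic $({\bf F}(\Theta,\mathcal{V}),\vdash)$ over the formula algebra of a signature $\Theta$ (with denumerable set $\mathcal{V}$ of variables) is Tarskian if $\vdash$ is reflexive ($\varphi\in\Gamma\Rightarrow\Gamma\vdash\varphi$), monotone, and satisfies cut (if $\Gamma\vdash\delta$ for all $\delta\in\Delta$ and $\Delta\vdash\psi$ then $\Gamma\vdash\psi$); structural if closed under substitutions (endomorphisms of the formula algebra). A $\Theta$-multialgebra assigns to each $n$-ary connective $\sigma$ a function $\sigma_{\mathcal{A}}:A^n\to\wp(A)\setminus\{\emptyset\}$; a valuation is $\nu:{\bf F}(\Theta,\mathcal{V})\to A$ with $\nu(\sigma(\varphi_1,\dots,\varphi_n))\in\sigma_{\mathcal{A}}(\nu(\varphi_1),\dots,\nu(\varphi_n))$. An RNmatrix is $(\mathcal{A},D,\mathcal{F})$ with $\emptyset\neq D\subseteq A$ and $\mathcal{F}$ a set of valuations; it is structural if $\nu\circ\rho\in\mathcal{F}$ whenever $\nu\in\mathcal{F}$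 and $\rho$ is a substitution; $\Gamma\vDash^{\mathsf{RN}}_{\mathcal{M}}\varphi$ iff every $\nu\in\mathcal{F}$ with $\nu[\Gamma]\subseteq D$ has $\nu(\varphi)\in D$. *)

theory Defs
  imports Main
begin

text \<open>Formulas over a signature Theta: connectives of type 'c with arity function ar,
  denumerably many variables (indexed by nat).\<close>
datatype 'c form = Var nat | Op 'c "'c form list"

fun wff :: "('c \<Rightarrow> nat) \<Rightarrow> 'c form \<Rightarrow> bool" where
  "wff ar (Var n) = True"
| "wff ar (Op c args) = (length args = ar c \<and> (\<forall>a\<in>set args. wff ar a))"

definition Fm :: "('c \<Rightarrow> nat) \<Rightarrow> 'c form set" where
  "Fm ar = {\<phi>. wff ar \<phi>}"

fun subst :: "(nat \<Rightarrow> 'c form) \<Rightarrow> 'c form \<Rightarrow> 'c form" where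
  "subst \<sigma> (Var n) = \<sigma> n"
| "subst \<sigma> (Op c args) = Op c (map (subst \<sigma>) args)"

definition is_subst :: "('c \<Rightarrow> nat) \<Rightarrow> (nat \<Rightarrow> 'c form) \<Rightarrow> bool" where
  "is_subst ar \<sigma> = (\<forall>n. wff ar (\<sigma> n))"

definition tarskian :: "('c \<Rightarrow> nat) \<Rightarrow> ('c form set \<Rightarrow> 'c form \<Rightarrow> bool) \<Rightarrow> bool" where
  "tarskian ar der =
    ((\<forall>\<Gamma> \<phi>. \<Gamma> \<subseteq> Fm ar \<and> \<phi> \<in> \<Gamma> \<longrightarrow> der \<Gamma> \<phi>) \<and>
     (\<forall>\<Gamma> \<Delta> \<phi>. \<Gamma> \<subseteq> \<Delta> \<and> \<Delta> \<subseteq> Fm ar \<and> \<phi> \<in> Fm ar \<and> der \<Gamma> \<phi> \<longrightarrow> der \<Delta> \<phi>) \<and>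
     (\<forall>\<Gamma> \<Delta> \<psi>. \<Gamma> \<subseteq> Fm ar \<and> \<Delta> \<subseteq> Fm ar \<and> \<psi> \<in> Fm ar \<and>
        (\<forall>\<delta>\<in>\<Delta>. der \<Gamma> \<delta>) \<and> der \<Delta> \<psi> \<longrightarrow> der \<Gamma> \<psi>))"

definition structural_logic :: "('c \<Rightarrow> nat) \<Rightarrow> ('c form set \<Rightarrow> 'c form \<Rightarrow> bool) \<Rightarrow> bool" where
  "structural_logic ar der =
    (\<forall>\<sigma> \<Gamma> \<phi>. is_subst ar \<sigma> \<and> \<Gamma> \<subseteq> Fm ar \<and> \<phi> \<in> Fm ar \<and> der \<Gamma> \<phi>
        \<longrightarrow> der (subst \<sigma> ` \<Gamma>) (subst \<sigma> \<phi>))"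

definition multialgebra :: "('c \<Rightarrow> nat) \<Rightarrow> 'v set \<Rightarrow> ('c \<Rightarrow> 'v list \<Rightarrow> 'v set) \<Rightarrow> bool" where
  "multialgebra ar A ops =
    (\<forall>c xs. length xs = ar c \<and> set xs \<subseteq> A \<longrightarrow> ops c xs \<noteq> {} \<and> ops c xs \<subseteq> A)"

text \<open>Convention: valuations are functions on all (raw) terms; on ill-formed
  terms (which are not formulas) they take a fixed junk value, so that each valuation
  F(Theta,V) -> A corresponds to exactly one HOL function.\<close>
definition valuation :: "('c \<Rightarrow> nat) \<Rightarrow> 'v set \<Rightarrow> ('c \<Rightarrow> 'v list \<Rightarrow> 'v set) \<Rightarrow> ('c form \<Rightarrow> 'v) \<Rightarrow> bool" where
  "valuation ar A ops \<nu> =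
    ((\<forall>\<phi>. \<phi> \<in> Fm ar \<longrightarrow> \<nu> \<phi> \<in> A) \<and>
     (\<forall>\<phi>. \<phi> \<notin> Fm ar \<longrightarrow> \<nu> \<phi> = undefined) \<and>
     (\<forall>c args. Op c args \<in> Fm ar \<longrightarrow> \<nu> (Op c args) \<in> ops c (map \<nu> args)))"

definition rnmatrix :: "('c \<Rightarrow> nat) \<Rightarrow> 'v set \<Rightarrow> ('c \<Rightarrow> 'v list \<Rightarrow> 'v set) \<Rightarrow> 'v set
    \<Rightarrow> ('c form \<Rightarrow> 'v) set \<Rightarrow> bool" where
  "rnmatrix ar A ops D F =
    (multialgebra ar A ops \<and> D \<noteq> {} \<and> D \<subseteq> A \<and> (\<forall>\<nu>\<in>F. valuation ar A ops \<nu>))"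

definition structural_rn :: "('c \<Rightarrow> nat) \<Rightarrow> ('c form \<Rightarrow> 'v) set \<Rightarrow> bool" where
  "structural_rn ar F = (\<forall>\<nu>\<in>F. \<forall>\<sigma>. is_subst ar \<sigma> \<longrightarrow> \<nu> \<circ> subst \<sigma> \<in> F)"

definition rn_conseq :: "'v set \<Rightarrow> ('c form \<Rightarrow> 'v) set \<Rightarrow> 'c form set \<Rightarrow> 'c form \<Rightarrow> bool" where
  "rn_conseq D F \<Gamma> \<phi> = (\<forall>\<nu>\<in>F. \<nu> ` \<Gamma> \<subseteq> D \<longrightarrow> \<nu> \<phi> \<in> D)"

end

theory Submission
  imports Defs
begin

lemma wff_subst:
  assumes "is_subst ar \<sigma>"
  shows "wff ar (subst \<sigma> \<psi>) = wff ar \<psi>"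
  using assms by (induction \<psi>) (auto simp: is_subst_def)

definition chi :: "('c \<Rightarrow> nat) \<Rightarrow> 'c form set \<Rightarrow> 'c form \<Rightarrow> nat" where
  "chi ar T \<psi> = (if \<psi> \<in> Fm ar then (if \<psi> \<in> T then 1 else 0) else undefined)"

theorem mainTheorem2:
  fixes ar :: "'c \<Rightarrow> nat" and der :: "'c form set \<Rightarrow> 'c form \<Rightarrow> bool"
  assumes "tarskian ar der"
  shows "\<exists>(ops :: 'c \<Rightarrow> nat list \<Rightarrow> nat set) F.
           rnmatrix ar {0, 1} ops {1} F \<and>
           (\<forall>\<Gamma> \<phi>. \<Gamma> \<subseteq> Fm ar \<and> \<phi> \<in> Fm ar \<longrightarrow> (der \<Gamma> \<phi> \<longleftrightarrow> rn_conseq {1} F \<Gamma> \<phi>)) \<and>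
           (structural_logic ar der \<longrightarrow> structural_rn ar F)"
proof -
  note T3 = assms[unfolded tarskian_def]
  have refl: "\<And>\<Gamma> \<phi>. \<Gamma> \<subseteq> Fm ar \<Longrightarrow> \<phi> \<in> \<Gamma> \<Longrightarrow> der \<Gamma> \<phi>"
    using T3[THEN conjunct1] by blast
  have mono: "\<And>\<Gamma> \<Delta> \<phi>. \<Gamma> \<subseteq> \<Delta> \<Longrightarrow> \<Delta> \<subseteq> Fm ar \<Longrightarrow> \<phi> \<in> Fm ar \<Longrightarrow> der \<Gamma> \<phi> \<Longrightarrow> der \<Delta> \<phi>"
  proof -
    fix \<Gamma> \<Delta> \<phi> assume "\<Gamma> \<subseteq> \<Delta>" "\<Delta> \<subseteq> Fm ar" "\<phi> \<in> Fm ar" "der \<Gamma> \<phi>"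
    then show "der \<Delta> \<phi>" using T3[THEN conjunct2, THEN conjunct1, rule_format, of \<Gamma> \<Delta> \<phi>] by simp
  qed
  have cut: "\<And>\<Gamma> \<Delta> \<psi>. \<Gamma> \<subseteq> Fm ar \<Longrightarrow> \<Delta> \<subseteq> Fm ar \<Longrightarrow> \<psi> \<in> Fm ar \<Longrightarrow>
        (\<forall>\<delta>\<in>\<Delta>. der \<Gamma> \<delta>) \<Longrightarrow> der \<Delta> \<psi> \<Longrightarrow> der \<Gamma> \<psi>"
  proof -
    fix \<Gamma> \<Delta> \<psi> assume "\<Gamma> \<subseteq> Fm ar" "\<Delta> \<subseteq> Fm ar" "\<psi> \<in> Fm ar" "\<forall>\<delta>\<in>\<Delta>. der \<Gamma> \<delta>" "der \<Delta> \<psi>"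
    then show "der \<Gamma> \<psi>" using T3[THEN conjunct2, THEN conjunct2, rule_format, of \<Gamma> \<Delta> \<psi>] by simp
  qed
  define ops :: "'c \<Rightarrow> nat list \<Rightarrow> nat set" where "ops = (\<lambda>c xs. {0,1})"
  define Th where "Th = {T. T \<subseteq> Fm ar \<and> (\<forall>\<psi>\<in>Fm ar. der T \<psi> \<longrightarrow> \<psi> \<in> T)}"
  define F where "F = chi ar ` Th"
  have rn: "rnmatrix ar {0, 1} ops {1} F"
    unfolding rnmatrix_def multialgebra_def ops_def F_def valuation_def chi_def by auto
  have eq: "der \<Gamma> \<phi> \<longleftrightarrow> rn_conseq {1} F \<Gamma> \<phi>" if G: "\<Gamma> \<subseteq> Fm ar" and p: "\<phi> \<in> Fm ar" for \<Gamma> \<phi>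
  proof
    assume d: "der \<Gamma> \<phi>"
    show "rn_conseq {1} F \<Gamma> \<phi>" unfolding rn_conseq_def F_def
    proof (intro ballI impI)
      fix \<nu> assume "\<nu> \<in> chi ar ` Th" and s: "\<nu> ` \<Gamma> \<subseteq> {1}"
      then obtain T where T: "T \<in> Th" "\<nu> = chi ar T" by auto
      have "\<Gamma> \<subseteq> T"
      proof
        fix x assume x: "x \<in> \<Gamma>"
        then have "chi ar T x = 1" using s T by auto
        then show "x \<in> T" using x G by (auto simp: chi_def split: if_splits)
      qed
      moreover have "T \<subseteq> Fm ar" using T by (auto simp: Th_def)
      ultimately have "der T \<phi>" using mono[OF _ _ p d] by blast
      then show "\<nu> \<phi> \<in> {1}" using T p by (auto simp: Th_def chi_def)
    qed
  next
    assume r: "rn_conseq {1} F \<Gamma> \<phi>"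
    define T where "T = {\<psi>\<in>Fm ar. der \<Gamma> \<psi>}"
    have "T \<in> Th" unfolding Th_def
    proof (intro CollectI conjI ballI impI)
      show "T \<subseteq> Fm ar" by (auto simp: T_def)
      fix \<psi> assume "\<psi> \<in> Fm ar" "der T \<psi>"
      moreover have "T \<subseteq> Fm ar" "\<forall>\<delta>\<in>T. der \<Gamma> \<delta>" by (auto simp: T_def)
      ultimately have "der \<Gamma> \<psi>" using cut[OF G, of T \<psi>] by blast
      then show "\<psi> \<in> T" using \<open>\<psi> \<in> Fm ar\<close> by (auto simp: T_def)
    qed
    moreover have "\<Gamma> \<subseteq> T" using refl G by (auto simp: T_def)
    ultimately have "chi ar T \<phi> \<in> {1}" using r G unfolding rn_conseq_def F_def
      by (auto simp: chi_def)
    then show "der \<Gamma> \<phi>" using p by (auto simp: chi_def T_def split: if_splits)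
  qed
  have st: "structural_rn ar F" if sl: "structural_logic ar der"
    unfolding structural_rn_def
  proof (intro ballI allI impI)
    fix \<nu> \<sigma> assume "\<nu> \<in> F" and s: "is_subst ar \<sigma>"
    then obtain T where T: "T \<in> Th" "\<nu> = chi ar T" by (auto simp: F_def)
    define T' where "T' = {\<psi>\<in>Fm ar. subst \<sigma> \<psi> \<in> T}"
    have fm: "\<And>\<psi>. subst \<sigma> \<psi> \<in> Fm ar \<longleftrightarrow> \<psi> \<in> Fm ar"
      using wff_subst[OF s] by (simp add: Fm_def)
    have "T' \<in> Th" unfolding Th_def
    proof (intro CollectI conjI ballI impI)
      show "T' \<subseteq> Fm ar" by (auto simp: T'_def)
      fix \<psi> assume p: "\<psi> \<in> Fm ar" and d: "der T' \<psi>"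
      have "der (subst \<sigma> ` T') (subst \<sigma> \<psi>)"
        using sl s p d unfolding structural_logic_def by (auto simp: T'_def)
      moreover have "subst \<sigma> ` T' \<subseteq> T" by (auto simp: T'_def)
      moreover have "T \<subseteq> Fm ar" using T by (auto simp: Th_def)
      moreover have "subst \<sigma> \<psi> \<in> Fm ar" using fm p by blast
      ultimately have "der T (subst \<sigma> \<psi>)" using mono[of "subst \<sigma> ` T'" T "subst \<sigma> \<psi>"] by blast
      then show "\<psi> \<in> T'" using T fm p by (auto simp: Th_def T'_def)
    qed
    moreover have "\<nu> \<circ> subst \<sigma> = chi ar T'"
      using T fm by (auto simp: chi_def T'_def fun_eq_iff)
    ultimately show "\<nu> \<circ> subst \<sigma> \<in> F" by (auto simp: F_def)
  qed
  show ?thesis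
    apply (rule exI[of _ ops], rule exI[of _ F])
    using rn eq st by simp
qed

end
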